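(* Let $B$ be a ring, $X$ an $m\times n$ matrix of indeterminates, and $\delta=[c_1,\ldots,c_r|d_1,\ldots,d_r]\in\Delta(X)$, with associated $t$ and $\tau_i$ ($1\le i\le t$) as in the context. For every $1\le i\le t$ there exists an integer $1\le N_i\le r$ such that: (1) if $[e_1,\ldots,e_s|f_1,\ldots,f_s]\in\Delta(X;\delta)\setminus\Delta(X;\tau_i)$, then $s\ge N_i$; (2) for every $N_i\le s\le r$, $[c_1,\ldots,c_s|d_1,\ldots,d_s]\in\Delta(X;\delta)\setminus\Delta(X;\tau_i)$.
   Context: Let $B$ be a ring and $X$ an $m\times n$ matrix of indeterminates over $B$. For $1\le r\le\min\{m,n\}$, $1\le a_1<\cdots<a_r\le m$, $1\le b_1<\cdots<b_r\le n$, $[a_1,\ldots,a_r|b_1,\ldots,b_r]$ is the $r$-minor of $X$ with those rows and columns; $\Delta(X)$ is the set of all such minors, ordered by $[a_1,\ldots,a_r|b_1,\ldots,b_r]\le[c_1,\ldots,c_s|d_1,\ldots,d_s]$ iff $r\ge s$ and $a_i\le c_i$, $b_i\le d_i$ for $1\le i\le s$. For $\gamma\in\Delta(X)$, $\Delta(X;\gamma)=\{\xi\in\Delta(X)\mid\xi\ge\gamma\}$. Associated data: Let $N=n+m$. For $\delta=[c_1,\ldots,c_r|d_1,\ldots,d_r]$, let $\tilde\delta=[a_1,\ldots,a_m]$ be the increasing listing of $\{d_1,\ldots,d_r\}\cup\{m+n+1-e\mid e\in\{1,\ldots,m\}\setminus\{c_1,\ldots,c_r\}\}$. To a sequence $1\le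 b_1<\cdots<b_m\le N$ with $[b_1,\ldots,b_m]\ne[n+1,\ldots,n+m]$ associate the minor $[e_1,\ldots,e_s|b_1,\ldots,b_s]\in\Delta(X)$, where $s=\max\{j\mid b_j\le n\}$ and $\{e_1<\cdots<e_s\}=\{1,\ldots,m\}\setminus\{m+n+1-b_j\mid s<j\le m\}$. Blocks of $\tilde\delta$: set $a_{m+1}=N+1$; decompose $\{a_1,\ldots,a_m\}$ into maximal runs of consecutive integers; if $a_m=N$ the run containing $N$ is $\beta_{t+1}$, else $\beta_{t+1}=\emptyset$; the other runs in increasing order are $\beta_0,\ldots,\beta_t$, $\beta_i=\{a_{k(i)+1},\ldots,a_{k(i+1)}\}$, $0=k(0)<\cdots<k(t+1)$. For $1\le i\le t$, $\tilde\tau_i$ is the increasing listing of $(\{a_1,\ldots,a_m\}\setminus\{a_{k(i)}\})\cup\{a_{k(i+1)}+1\}$. If $\tilde\tau_i\ne[n+1,\ldots,n+m]$, $\tau_i\in\Delta(X;\delta)$ is the minor associated to $\tilde\tau_i$; if $\tilde\tau_i=[n+1,\ldots,n+m]$, one sets $\Delta(X;\tau_i)=\emptyset$. *)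

theory Defs
  imports Main
begin

text \<open>A minor [a_1..a_r | b_1..b_r] of an m x n matrix is represented by the pair of
  lists (rows, columns); list positions are 0-based, entries are 1-based indices.\<close>

definition is_minor :: "nat \<Rightarrow> nat \<Rightarrow> nat list \<times> nat list \<Rightarrow> bool" where
  "is_minor m n x \<longleftrightarrow> (case x of (a, b) \<Rightarrow>
      length a = length b \<and> 1 \<le> length a \<and> length a \<le> min m n \<and>
      sorted_wrt (<) a \<and> sorted_wrt (<) b \<and>
      set a \<subseteq> {1..m} \<and> set b \<subseteq> {1..n})"

definition minors :: "nat \<Rightarrow> nat \<Rightarrow> (nat list \<times> nat list) set" where
  "minors m n = {x. is_minor m n x}"

definition minor_le :: "nat list \<times> nat list \<Rightarrow> nat list \<times> nat list \<Rightarrow> bool" where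
  "minor_le x y \<longleftrightarrow> (case x of (a, b) \<Rightarrow> case y of (c, d) \<Rightarrow>
      length c \<le> length a \<and> (\<forall>i < length c. a ! i \<le> c ! i \<and> b ! i \<le> d ! i))"

definition upset :: "nat \<Rightarrow> nat \<Rightarrow> nat list \<times> nat list \<Rightarrow> (nat list \<times> nat list) set" where
  "upset m n \<gamma> = {\<xi> \<in> minors m n. minor_le \<gamma> \<xi>}"

definition assoc_seq :: "nat \<Rightarrow> nat \<Rightarrow> nat list \<times> nat list \<Rightarrow> nat list" where
  "assoc_seq m n x = (case x of (c, d) \<Rightarrow>
      sorted_list_of_set (set d \<union> {m + n + 1 - e | e. e \<in> {1..m} - set c}))"

text \<open>The minor associated to a sequence b_1 < ... < b_m (different from [n+1..n+m]).\<close>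
definition assoc_minor :: "nat \<Rightarrow> nat \<Rightarrow> nat list \<Rightarrow> nat list \<times> nat list" where
  "assoc_minor m n b = (let s = Max {j. 1 \<le> j \<and> j \<le> m \<and> b ! (j - 1) \<le> n} in
      (sorted_list_of_set ({1..m} - {m + n + 1 - b ! (j - 1) | j. s < j \<and> j \<le> m}),
       take s b))"

text \<open>Blocks of tilde-delta = [a_1..a_m]: the maximal runs of consecutive integers.
  The run containing N = n+m (if any) is beta_(t+1); the remaining runs, in increasing
  order, are beta_0, ..., beta_t. A run is determined by its last element x (x \<in> A,
  x+1 \<notin> A), so the list of last elements a_(k(1)), ..., a_(k(t+1)) of
  beta_0, ..., beta_t is the increasing listing of the x \<in> A with x+1 \<notin> A, x \<noteq> N.\<close>
definition block_ends :: "nat \<Rightarrow> nat \<Rightarrow> nat list \<times> nat list \<Rightarrow> nat list" where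
  "block_ends m n x = (let A = set (assoc_seq m n x) in
      sorted_list_of_set {y \<in> A. Suc y \<notin> A \<and> y \<noteq> n + m})"

text \<open>t (so that the blocks other than beta_(t+1) are beta_0..beta_t)\<close>
definition num_t :: "nat \<Rightarrow> nat \<Rightarrow> nat list \<times> nat list \<Rightarrow> nat" where
  "num_t m n x = length (block_ends m n x) - 1"

text \<open>tilde-tau_i = increasing listing of (A - {a_(k(i))}) \<union> {a_(k(i+1)) + 1}, 1 \<le> i \<le> t;
  a_(k(i)) is the last element of beta_(i-1), a_(k(i+1)) the last element of beta_i.\<close>
definition tau_seq :: "nat \<Rightarrow> nat \<Rightarrow> nat list \<times> nat list \<Rightarrow> nat \<Rightarrow> nat list" where
  "tau_seq m n x i = (let A = set (assoc_seq m n x); E = block_ends m n x in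
      sorted_list_of_set ((A - {E ! (i - 1)}) \<union> {E ! i + 1}))"

definition tau_upset :: "nat \<Rightarrow> nat \<Rightarrow> nat list \<times> nat list \<Rightarrow> nat \<Rightarrow> (nat list \<times> nat list) set" where
  "tau_upset m n x i = (if tau_seq m n x i = [n + 1 ..< n + m + 1] then {}
      else upset m n (assoc_minor m n (tau_seq m n x i)))"

end

theory Submission imports Defs begin

definition rowsT :: "nat \<Rightarrow> nat \<Rightarrow> nat set \<Rightarrow> nat set" where
  "rowsT m n T = {1..m} - (\<lambda>x. m+n+1-x) ` {x\<in>T. n<x}"

lemma dropWhile_gt:
  "sorted xs \<Longrightarrow> y \<in> set (dropWhile (\<lambda>x. x \<le> (n::nat)) xs) \<Longrightarrow> n < y"
  by (induction xs) (auto split: if_splits)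

lemma L1:
  fixes T :: "nat set"
  assumes fin: "finite T" and cT: "card T = m" and ne: "{x\<in>T. x\<le>n} \<noteq> {}"
  shows "assoc_minor m n (sorted_list_of_set T) =
     (sorted_list_of_set (rowsT m n T), takeWhile (\<lambda>x. x\<le>n) (sorted_list_of_set T))"
    and "set (takeWhile (\<lambda>x. x\<le>n) (sorted_list_of_set T)) = {x\<in>T. x\<le>n}"
    and "distinct (takeWhile (\<lambda>x. x\<le>n) (sorted_list_of_set T))"
proof -
  define xs where "xs = sorted_list_of_set T"
  define tw where "tw = takeWhile (\<lambda>x. x\<le>n) xs"
  define dw where "dw = dropWhile (\<lambda>x. x\<le>n) xs"
  define k where "k = length tw"
  have xs: "xs = tw @ dw" unfolding tw_def dw_def by simp
  have lxs: "length xs = m" using cT fin unfolding xs_def by simp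
  have sxs: "sorted xs" "distinct xs" "set xs = T" unfolding xs_def using fin by auto
  have stw: "set tw \<subseteq> {x. x \<le> n}" unfolding tw_def by (auto dest: set_takeWhileD)
  have sdw: "set dw \<subseteq> {x. n < x}" unfolding dw_def using dropWhile_gt[OF sxs(1)] by auto
  have settw: "set tw = {x\<in>T. x\<le>n}" using stw sdw sxs(3) xs by auto
  have setdw: "set dw = {x\<in>T. n<x}" using stw sdw sxs(3) xs by auto
  show "set (takeWhile (\<lambda>x. x\<le>n) (sorted_list_of_set T)) = {x\<in>T. x\<le>n}"
    using settw unfolding tw_def xs_def .
  show "distinct (takeWhile (\<lambda>x. x\<le>n) (sorted_list_of_set T))"
    using sxs(2) xs unfolding tw_def xs_def by (metis distinct_append takeWhile_dropWhile_id)
  have k1: "1 \<le> k" using ne settw unfolding k_def by (cases tw) auto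
  have km: "k \<le> m" using lxs xs k_def by simp
  have ldw: "length dw = m - k" using lxs xs k_def by simp
  have S: "{j. 1 \<le> j \<and> j \<le> m \<and> xs ! (j - 1) \<le> n} = {1..k}"
  proof (intro set_eqI iffI)
    fix j assume "j \<in> {j. 1 \<le> j \<and> j \<le> m \<and> xs ! (j - 1) \<le> n}"
    hence j: "1 \<le> j" "j \<le> m" "xs ! (j-1) \<le> n" by auto
    show "j \<in> {1..k}"
    proof (rule ccontr)
      assume "j \<notin> {1..k}"
      hence "k \<le> j - 1" using j by auto
      hence "xs ! (j-1) = dw ! (j-1-k)" using xs k_def by (simp add: nth_append)
      moreover have "j-1-k < length dw" using ldw j \<open>k \<le> j - 1\<close> by simp
      ultimately have "xs ! (j-1) \<in> set dw" by simp
      thus False using sdw j(3) by auto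
    qed
  next
    fix j assume "j \<in> {1..k}"
    hence j: "1 \<le> j" "j \<le> k" by auto
    have jl: "j - 1 < length tw" using j k_def by simp
    hence "xs ! (j-1) = tw ! (j-1)" using xs by (simp add: nth_append)
    moreover note jl
    ultimately have "xs ! (j-1) \<in> set tw" by simp
    thus "j \<in> {j. 1 \<le> j \<and> j \<le> m \<and> xs ! (j - 1) \<le> n}" using stw j km by auto
  qed
  have M: "Max {j. 1 \<le> j \<and> j \<le> m \<and> xs ! (j - 1) \<le> n} = k" using S k1 by (simp add: Max_eq_iff)
  have R: "{m + n + 1 - xs ! (j - 1) | j. k < j \<and> j \<le> m} = (\<lambda>x. m+n+1-x) ` {x\<in>T. n<x}"
  proof -
    have "{xs ! (j - 1) | j. k < j \<and> j \<le> m} = set dw"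
    proof (intro set_eqI iffI)
      fix y assume "y \<in> {xs ! (j - 1) | j. k < j \<and> j \<le> m}"
      then obtain j where j: "k < j" "j \<le> m" "y = xs ! (j-1)" by auto
      moreover have "\<not> j - 1 < length tw" using j k_def by simp
      ultimately have "y = dw ! (j-1-k)" using xs k_def by (simp add: nth_append)
      moreover have "j-1-k < length dw" using ldw j by simp
      ultimately show "y \<in> set dw" by simp
    next
      fix y assume "y \<in> set dw"
      then obtain i where i: "i < length dw" "y = dw ! i" by (auto simp: in_set_conv_nth)
      hence "y = xs ! (Suc (i + k) - 1)" using xs k_def by (simp add: nth_append)
      moreover have "k < Suc (i+k)" "Suc (i+k) \<le> m" using i ldw by auto
      ultimately show "y \<in> {xs ! (j - 1) | j. k < j \<and> j \<le> m}" by blast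
    qed
    moreover have "{m + n + 1 - xs ! (j - 1) | j. k < j \<and> j \<le> m} =
      (\<lambda>x. m+n+1-x) ` {xs ! (j - 1) | j. k < j \<and> j \<le> m}" by auto
    ultimately show ?thesis using setdw by simp
  qed
  have tk: "take k xs = tw" unfolding k_def tw_def by (metis takeWhile_eq_take)
  show "assoc_minor m n (sorted_list_of_set T) =
     (sorted_list_of_set (rowsT m n T), takeWhile (\<lambda>x. x\<le>n) (sorted_list_of_set T))"
    unfolding assoc_minor_def Let_def rowsT_def xs_def[symmetric] M R tk tw_def ..
qed

lemma L2:
  fixes T :: "nat set"
  assumes fin: "finite T" and sub: "T \<subseteq> {1..m+n}" and cT: "card T = m"
  shows "card (rowsT m n T) = card {x\<in>T. x\<le>n}"
    and "sum id (rowsT m n T) + (m - card {x\<in>T. x\<le>n}) * (m+n+1) = sum id {1..m} + sum id {x\<in>T. n<x}"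
proof -
  let ?f = "\<lambda>x::nat. m+n+1-x"
  let ?H = "{x\<in>T. n<x}" and ?L = "{x\<in>T. x\<le>n}"
  have inj: "inj_on ?f ?H" using sub by (auto simp: inj_on_def)
  have subb: "\<forall>x\<in>T. 1 \<le> x \<and> x \<le> m+n" using sub by auto
  have imsub: "?f ` ?H \<subseteq> {1..m}"
  proof
    fix y assume "y \<in> ?f ` ?H"
    then obtain x where x: "x\<in>T" "n<x" "y = ?f x" by auto
    moreover have "1\<le>x" "x\<le>m+n" using subb x(1) by auto
    ultimately show "y\<in>{1..m}" by auto
  qed
  have cHL: "card ?H + card ?L = m"
  proof -
    have "?H \<union> ?L = T" "?H \<inter> ?L = {}" by auto
    thus ?thesis using card_Un_disjoint[of ?H ?L] fin cT by (metis finite_Un)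
  qed
  have cim: "card (?f ` ?H) = card ?H" using card_image[OF inj] .
  show "card (rowsT m n T) = card ?L"
    unfolding rowsT_def using card_Diff_subset[OF finite_subset[OF imsub] imsub] cim cHL by simp
  have s1: "sum id (rowsT m n T) + sum id (?f ` ?H) = sum id {1..m}"
    unfolding rowsT_def using sum.subset_diff[OF imsub, of id] by simp
  have s2: "sum id (?f ` ?H) = (\<Sum>x\<in>?H. m+n+1-x)" using sum.reindex[OF inj] by simp
  have s3: "(\<Sum>x\<in>?H. m+n+1-x) + sum id ?H = card ?H * (m+n+1)"
  proof -
    have "(\<Sum>x\<in>?H. m+n+1-x) + sum id ?H = (\<Sum>x\<in>?H. (m+n+1-x) + x)" by (simp add: sum.distrib)
    also have "\<dots> = (\<Sum>x\<in>?H. m+n+1)" using subb by (intro sum.cong) auto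
    finally show ?thesis by simp
  qed
  have "m - card ?L = card ?H" using cHL by simp
  thus "sum id (rowsT m n T) + (m - card ?L) * (m+n+1) = sum id {1..m} + sum id ?H"
    using s1 s2 s3 by simp
qed

lemma L3:
  fixes xs ys :: "nat list"
  assumes "distinct xs" "distinct ys" "length xs = length ys" "\<forall>j<length ys. xs!j \<le> ys!j"
  shows "sum id (set xs) \<le> sum id (set ys)"
proof -
  have "sum id (set xs) = sum_list xs" using sum_list_distinct_conv_sum_set[OF assms(1), of id] by simp
  also have "\<dots> = (\<Sum>j<length xs. xs!j)" by (simp add: sum_list_sum_nth atLeast0LessThan)
  also have "\<dots> \<le> (\<Sum>j<length ys. ys!j)" using assms(3,4) by (auto intro!: sum_mono)
  also have "\<dots> = sum_list ys" by (simp add: sum_list_sum_nth atLeast0LessThan)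
  also have "\<dots> = sum id (set ys)" using sum_list_distinct_conv_sum_set[OF assms(2), of id] by simp
  finally show ?thesis .
qed

lemma L4:
  assumes mn: "(c, d) \<in> minors m n"
  defines "A \<equiv> set (assoc_seq m n (c, d))"
  shows "finite A" "A \<subseteq> {1..m+n}" "card A = m" "{x\<in>A. x\<le>n} = set d" "rowsT m n A = set c"
proof -
  let ?f = "\<lambda>x::nat. m+n+1-x"
  let ?G = "?f ` ({1..m} - set c)"
  have mi: "length c = length d" "sorted_wrt (<) c" "sorted_wrt (<) d" "set c \<subseteq> {1..m}" "set d \<subseteq> {1..n}"
    using mn unfolding minors_def is_minor_def by auto
  have setG: "{m + n + 1 - e | e. e \<in> {1..m} - set c} = ?G" by auto
  have fin: "finite (set d \<union> ?G)" by simp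
  have Aeq: "A = set d \<union> ?G" unfolding A_def assoc_seq_def using setG fin by simp
  show "finite A" using Aeq by simp
  show "A \<subseteq> {1..m+n}" using Aeq mi(5) by auto
  have Gsub: "?G \<subseteq> {n<..}" by auto
  have injG: "inj_on ?f ({1..m} - set c)" by (auto simp: inj_on_def)
  have dc: "distinct c" "distinct d" using mi(2,3) by (auto simp: strict_sorted_iff)
  have c1: "card (set d) = length c" using dc(2) mi(1) by (simp add: distinct_card)
  have c2: "card ?G = m - length c"
    using card_image[OF injG] card_Diff_subset[OF _ mi(4)] dc(1) by (simp add: distinct_card)
  have dle: "\<forall>x\<in>set d. x \<le> n" using mi(5) by auto
  have Gg: "\<forall>x\<in>?G. n < x" by auto
  have c3: "set d \<inter> ?G = {}" using dle Gg by (meson disjoint_iff leD)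
  have c4: "length c \<le> m" using card_mono[OF _ mi(4)] dc(1) by (simp add: distinct_card)
  have "card A = card (set d) + card ?G" using Aeq card_Un_disjoint[OF _ _ c3] by simp
  thus "card A = m" using c1 c2 c4 by simp
  show "{x\<in>A. x\<le>n} = set d"
  proof -
    have "{x\<in>A. x\<le>n} = {x\<in>set d. x\<le>n} \<union> {x\<in>?G. x\<le>n}" using Aeq by blast
    also have "{x\<in>?G. x\<le>n} = {}" using Gg leD by blast
    also have "{x\<in>set d. x\<le>n} = set d" using dle by blast
    finally show ?thesis by simp
  qed
  have H: "{x\<in>A. n<x} = ?G"
  proof -
    have "{x\<in>A. n<x} = {x\<in>set d. n<x} \<union> {x\<in>?G. n<x}" using Aeq by blast
    also have "{x\<in>set d. n<x} = {}" using dle leD by blast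
    also have "{x\<in>?G. n<x} = ?G" using Gg by blast
    finally show ?thesis by simp
  qed
  have "?f ` ?G = {1..m} - set c"
  proof -
    have "?f ` ?G = (?f \<circ> ?f) ` ({1..m} - set c)" by (simp add: image_comp)
    also have "\<dots> = id ` ({1..m} - set c)" by (rule image_cong) auto
    also have "\<dots> = {1..m} - set c" by simp
    finally show ?thesis .
  qed
  thus "rowsT m n A = set c" unfolding rowsT_def H using mi(4) by auto
qed

lemma sum_split_n:
  fixes X :: "nat set"
  assumes "finite X"
  shows "sum id X = sum id {x\<in>X. x\<le>n} + sum id {x\<in>X. n<x}"
proof -
  have "X = {x\<in>X. x\<le>n} \<union> {x\<in>X. n<x}" by auto
  moreover have "{x\<in>X. x\<le>n} \<inter> {x\<in>X. n<x} = {}" by auto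
  ultimately show ?thesis using sum.union_disjoint[of "{x\<in>X. x\<le>n}" "{x\<in>X. n<x}" id] assms
    by (metis (no_types, lifting) finite_Un)
qed

lemma L5:
  assumes mn: "(c, d) \<in> minors m n" and i1: "1 \<le> i" and it: "i \<le> num_t m n (c, d)"
  shows "(c, d) \<notin> tau_upset m n (c, d) i"
proof
  assume mem: "(c, d) \<in> tau_upset m n (c, d) i"
  define A where "A = set (assoc_seq m n (c, d))"
  note LA = L4[OF mn, folded A_def]
  define Bs where "Bs = {y\<in>A. Suc y \<notin> A \<and> y \<noteq> n + m}"
  define E where "E = block_ends m n (c, d)"
  have E: "E = sorted_list_of_set Bs" unfolding E_def block_ends_def Bs_def A_def Let_def ..
  have finB: "finite Bs" using LA(1) unfolding Bs_def by simp
  have iE: "i < length E" using it i1 unfolding num_t_def E_def[symmetric] by simp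
  define u where "u = E ! (i-1)"
  define v where "v = E ! i"
  have uv: "u < v" unfolding u_def v_def E
    using sorted_wrt_nth_less[OF strict_sorted_list_of_set[of Bs]] iE i1 E by simp
  have uB: "u \<in> Bs" unfolding u_def using iE E finB
    by (metis diff_less less_imp_diff_less nth_mem set_sorted_list_of_set zero_less_one)
  have vB: "v \<in> Bs" unfolding v_def using iE E finB by (metis nth_mem set_sorted_list_of_set)
  have uA: "u \<in> A" using uB Bs_def by simp
  have vA: "v \<in> A" "Suc v \<notin> A" "v \<noteq> n + m" using vB Bs_def by auto
  define T where "T = (A - {u}) \<union> {v+1}"
  have tau: "tau_seq m n (c, d) i = sorted_list_of_set T"
    unfolding tau_seq_def Let_def T_def A_def[symmetric] E_def[symmetric] u_def v_def ..
  have finT: "finite T" using LA(1) T_def by simp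
  have subT: "T \<subseteq> {1..m+n}" using LA(2) vA uA unfolding T_def by auto
  have cT: "card T = m"
  proof -
    have "T = insert (Suc v) (A - {u})" unfolding T_def by simp
    moreover have "Suc v \<notin> A - {u}" using vA by simp
    moreover have "0 < m" using LA(1,3) uA card_gt_0_iff by blast
    ultimately show ?thesis using LA(1,3) uA by (simp add: card.insert_remove)
  qed
  have ne: "tau_seq m n (c, d) i \<noteq> [n + 1 ..< n + m + 1]"
    using mem unfolding tau_upset_def by (auto split: if_splits)
  hence tu: "tau_upset m n (c, d) i = upset m n (assoc_minor m n (sorted_list_of_set T))"
    unfolding tau_upset_def tau by simp
  have neL: "{x\<in>T. x\<le>n} \<noteq> {}"
  proof
    assume "{x\<in>T. x\<le>n} = {}"
    hence "T \<subseteq> {n+1..<n+m+1}" using subT by force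
    moreover have "card {n+1..<n+m+1} = m" by simp
    ultimately have "T = {n+1..<n+m+1}" using card_subset_eq cT by (metis finite_atLeastLessThan)
    thus False using ne tau by simp
  qed
  note L1T = L1[OF finT cT neL]
  define e' where "e' = sorted_list_of_set (rowsT m n T)"
  define f' where "f' = takeWhile (\<lambda>x. x\<le>n) (sorted_list_of_set T)"
  have le: "minor_le (e', f') (c, d)" using mem unfolding tu L1T(1) e'_def[symmetric] f'_def[symmetric] upset_def by simp
  hence le1: "length c \<le> length e'" and le2: "\<forall>j<length c. e'!j \<le> c!j \<and> f'!j \<le> d!j"
    unfolding minor_le_def by auto
  define r where "r = length c"
  have mi: "length c = length d" "sorted_wrt (<) c" "sorted_wrt (<) d"
    using mn unfolding minors_def is_minor_def by auto
  have dc: "distinct c" "distinct d" using mi(2,3) by (auto simp: strict_sorted_iff)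
  have rA: "card {x\<in>A. x\<le>n} = r" using LA(4) dc(2) mi(1) r_def by (simp add: distinct_card)
  note L2T = L2[OF finT subT cT]
  note L2A = L2[OF LA(1,2,3)]
  have le': "length e' = card {x\<in>T. x\<le>n}" unfolding e'_def using L2T(1) by simp
  have finAn: "finite {x\<in>A. x\<le>n}" using LA(1) by simp
  have kr: "card {x\<in>T. x\<le>n} \<le> r"
  proof (cases "v + 1 \<le> n")
    case True
    have eq: "{x\<in>T. x\<le>n} = insert (v+1) ({x\<in>A. x\<le>n} - {u})" unfolding T_def using uv True by auto
    have uin: "u \<in> {x\<in>A. x\<le>n}" using uA uv True by simp
    have vn: "v+1 \<notin> {x\<in>A. x\<le>n} - {u}" using vA by simp
    have "0 < r" using rA finAn uin card_gt_0_iff by blast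
    have "card {x\<in>T. x\<le>n} = Suc (card ({x\<in>A. x\<le>n} - {u}))" using eq vn finAn by simp
    also have "\<dots> = Suc (r - 1)" using card_Diff_singleton[OF uin] rA by simp
    finally show ?thesis using \<open>0 < r\<close> by simp
  next
    case False
    hence sub: "{x\<in>T. x\<le>n} \<subseteq> {x\<in>A. x\<le>n}" unfolding T_def by auto
    show ?thesis using card_mono[OF finAn sub] rA by simp
  qed
  have k: "card {x\<in>T. x\<le>n} = r" using kr le1 le' r_def by simp
  have lf': "length f' = r" using L1T(2,3) k unfolding f'_def[symmetric] by (metis distinct_card)
  have de': "distinct e'" unfolding e'_def by simp
  have ineq1: "sum id (rowsT m n T) \<le> sum id (rowsT m n A)"
  proof -
    have "sum id (set e') \<le> sum id (set c)"
      using L3[OF de' dc(1)] le2 le' k r_def by simp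
    moreover have "set e' = rowsT m n T" unfolding e'_def
      using finite_subset[OF _ finite_atLeastAtMost[of 1 m]] rowsT_def by (simp add: rowsT_def)
    ultimately show ?thesis using LA(5) by simp
  qed
  have ineq2: "sum id {x\<in>T. x\<le>n} \<le> sum id {x\<in>A. x\<le>n}"
  proof -
    have "sum id (set f') \<le> sum id (set d)"
      using L3[OF _ dc(2)] L1T(3) le2 lf' mi(1) r_def unfolding f'_def[symmetric] by simp
    thus ?thesis using L1T(2) LA(4) unfolding f'_def[symmetric] by simp
  qed
  have a: "sum id (rowsT m n T) + (m - r) * (m + n + 1) = sum id {1..m} + sum id {x \<in> T. n < x}"
    using L2T(2) k by simp
  have b: "sum id (rowsT m n A) + (m - r) * (m + n + 1) = sum id {1..m} + sum id {x \<in> A. n < x}"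
    using L2A(2) rA by simp
  have "sum id T \<le> sum id A"
    using ineq1 ineq2 a b sum_split_n[OF finT, of n] sum_split_n[OF LA(1), of n] by linarith
  moreover have "sum id T + u = sum id A + (v + 1)"
  proof -
    have "T = insert (Suc v) (A - {u})" unfolding T_def by simp
    moreover have "Suc v \<notin> A - {u}" using vA by simp
    ultimately have "sum id T = Suc v + sum id (A - {u})" using LA(1) by simp
    moreover have "sum id A = u + sum id (A - {u})" using LA(1) uA sum.remove by (metis id_apply)
    ultimately show ?thesis by simp
  qed
  ultimately show False using uv by simp
qed

theorem lemma4p7:
  fixes m n i :: nat and c d :: "nat list"
  assumes "(c, d) \<in> minors m n"
    and "1 \<le> i" and "i \<le> num_t m n (c, d)"
  shows "\<exists>Ni::nat. 1 \<le> Ni \<and> Ni \<le> length c \<and>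
    (\<forall>e f. (e, f) \<in> upset m n (c, d) - tau_upset m n (c, d) i \<longrightarrow> Ni \<le> length e) \<and>
    (\<forall>s. Ni \<le> s \<and> s \<le> length c \<longrightarrow>
       (take s c, take s d) \<in> upset m n (c, d) - tau_upset m n (c, d) i)"
proof -
  let ?U = "tau_upset m n (c, d) i"
  have nd: "(c, d) \<notin> ?U" using L5[OF assms] .
  have mi: "length c = length d" "1 \<le> length c" "length c \<le> min m n" "sorted_wrt (<) c" "sorted_wrt (<) d"
     "set c \<subseteq> {1..m}" "set d \<subseteq> {1..n}"
    using assms(1) unfolding minors_def is_minor_def by auto
  have trunc: "(take s c, take s d) \<in> upset m n (c, d)" if s: "1 \<le> s" "s \<le> length c" for s
  proof -
    have "is_minor m n (take s c, take s d)"
    proof -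
      have "set (take s c) \<subseteq> {1..m}" "set (take s d) \<subseteq> {1..n}"
        using mi(6,7) set_take_subset by (metis subset_trans)+
      thus ?thesis unfolding is_minor_def using s mi sorted_wrt_take by auto
    qed
    moreover have "minor_le (c, d) (take s c, take s d)" unfolding minor_le_def using s by simp
    ultimately show ?thesis unfolding upset_def minors_def by simp
  qed
  show ?thesis
  proof (cases "?U = {}")
    case True
    show ?thesis
      by (rule exI[of _ 1]) (use True trunc mi in \<open>auto simp: upset_def minors_def is_minor_def\<close>)
  next
    case False
    obtain e0 f0 where U: "?U = upset m n (e0, f0)"
      using False unfolding tau_upset_def by (metis prod.collapse)
    have "\<not> minor_le (e0, f0) (c, d)" using nd U assms(1) unfolding upset_def by simp
    hence nle: "\<not> (length c \<le> length e0 \<and> (\<forall>j<length c. e0 ! j \<le> c ! j \<and> f0 ! j \<le> d ! j))"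
      unfolding minor_le_def by simp
    define P where "P j \<longleftrightarrow> length e0 \<le> j \<or> c ! j < e0 ! j \<or> d ! j < f0 ! j" for j
    have ex: "\<exists>j. j < length c \<and> P j"
    proof (cases "length c \<le> length e0")
      case True
      then obtain j where "j < length c" "\<not> (e0 ! j \<le> c ! j \<and> f0 ! j \<le> d ! j)" using nle by auto
      thus ?thesis unfolding P_def by auto
    next
      case False
      thus ?thesis using mi(2) unfolding P_def by (intro exI[of _ "length c - 1"]) auto
    qed
    define j0 where "j0 = (LEAST j. j < length c \<and> P j)"
    have j0: "j0 < length c" "P j0" using LeastI_ex[OF ex] unfolding j0_def by auto
    have j0min: "\<not> P j" if "j < j0" for j
      using not_less_Least[of j "\<lambda>j. j < length c \<and> P j"] that j0(1) unfolding j0_def[symmetric] by auto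
    show ?thesis
    proof (intro exI[of _ "Suc j0"] conjI allI impI)
      show "1 \<le> Suc j0" by simp
      show "Suc j0 \<le> length c" using j0 by simp
    next
      fix e f assume ef: "(e, f) \<in> upset m n (c, d) - ?U"
      show "Suc j0 \<le> length e"
      proof (rule ccontr)
        assume "\<not> Suc j0 \<le> length e"
        hence lt: "length e \<le> j0" by simp
        have cd: "minor_le (c, d) (e, f)" "(e, f) \<in> minors m n" using ef unfolding upset_def by auto
        have "minor_le (e0, f0) (e, f)"
          unfolding minor_le_def
        proof (simp, intro conjI allI impI)
          show "length e \<le> length e0"
          proof (cases "length e")
            case (Suc l)
            hence "\<not> P l" using lt j0min by simp
            thus ?thesis using Suc unfolding P_def by simp
          qed simp
        next
          fix j assume j: "j < length e"
          hence np: "\<not> P j" using lt j0min by simp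
          have "c ! j \<le> e ! j" "d ! j \<le> f ! j" using cd(1) j unfolding minor_le_def by auto
          thus "e0 ! j \<le> e ! j" "f0 ! j \<le> f ! j" using np unfolding P_def by auto
        qed
        hence "(e, f) \<in> ?U" using U cd(2) unfolding upset_def by simp
        thus False using ef by simp
      qed
    next
      fix s assume s: "Suc j0 \<le> s \<and> s \<le> length c"
      have "(take s c, take s d) \<notin> ?U"
      proof
        assume "(take s c, take s d) \<in> ?U"
        hence "minor_le (e0, f0) (take s c, take s d)" using U unfolding upset_def by simp
        hence A: "s \<le> length e0" "\<forall>j<s. e0 ! j \<le> c ! j \<and> f0 ! j \<le> d ! j"
          using s mi(1) unfolding minor_le_def by auto
        have "j0 < s" using s by simp
        hence "e0 ! j0 \<le> c ! j0 \<and> f0 ! j0 \<le> d ! j0" using A(2) by blast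
        thus False using j0(2) A(1) \<open>j0 < s\<close> unfolding P_def by linarith
      qed
      thus "(take s c, take s d) \<in> upset m n (c, d) - ?U" using trunc s by simp
    qed
  qed
qed

end
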